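(* Let $\Psi=(\Psi_1,\Psi_2)$ be a Clifford conservative vectorial FQ operation which is Clifford productive, i.e. $\Psi_1^2=\Psi_2^2=-1$ and $\Psi_1\Psi_2+\Psi_2\Psi_1=0$ as formal series. Then $$\Psi(A_1,A_2)=\cdots(1+U^{\langle3\rangle})(1+U^{\langle2\rangle})(1+U^{\langle1\rangle})\,(Q_1,Q_2)\,(1+U^{\langle1\rangle})^{-1}(1+U^{\langle2\rangle})^{-1}(1+U^{\langle3\rangle})^{-1}\cdots$$ (conjugation applied componentwise, the infinite products converging formally) for some scalar FQ operations $U^{\langle i\rangle}$ homogeneous of degree $i$ ($i\ge1$). Moreover, the $U^{\langle i\rangle}$ can be chosen to satisfy $((U^{\langle i\rangle})^0_{Q_1})^0_{Q_2}=0$, and with this requirement they are uniquely determined by $\Psi$. Conversely, any such sequence $U^{\langle i\rangle}$ yields by this formula a Clifford conservative, Clifford productive vectorial FQ operation.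
   Context: Setting. $(Q_1,Q_2)$ is a Clifford system: $Q_1^2=Q_2^2=-1$, $Q_1Q_2=-Q_2Q_1$. $R_1,R_2$ are formal noncommuting infinitesimal variables; one works in the real algebra generated by $Q_1,Q_2,R_1,R_2$ (free apart from the Clifford relations), completed with respect to total degree in $R_1,R_2$. Put $A_i=Q_i+R_i$. For $Q$ with $Q^2=-1$ and any $X$ put $X^0_Q=\frac12(X+Q^{-1}XQ)$, $X^1_Q=\frac12(X-Q^{-1}XQ)$. The split variables are $r_1,\dots,r_8$: for $j\in\{1,2\}$, $\iota_1,\iota_2\in\{0,1\}$, $r_{4(j-1)+2\iota_1+\iota_2+1}=((R_jQ_j^{-1})^{\iota_1}_{Q_1})^{\iota_2}_{Q_2}$ (so $r_k$ commutes with $Q_m$ if $\iota_m=0$, anticommutes if $\iota_m=1$). A scalar FQ operation around $(Q_1,Q_2)$ is an element $f_0(r_1,\dots,r_8)$ with $f_0$ a formal real noncommutative power series; it is homogeneous of degree $i$ if $f_0$ is. A vectorial FQ operation is $\Psi(A_1,A_2)=(f_1(r)Q_1,f_2(r)Q_2)$ with $f_1,f_2$ such series; it is Clifford conservative if both constant terms equal $1$. *)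

theory Defs
  imports Complex_Main
begin

text \<open>
  The letter (j, i1, i2) stands for
  r_{4(j-1)+2 i1 + i2 + 1}, where j = False means j = 1, j = True means j = 2,
  and i1, i2 are read as 0/1.  Thus r_k commutes with Q_m if i_m = 0 and
  anticommutes with Q_m if i_m = 1.

  The real algebra generated by Q1, Q2, R1, R2 (free apart from the Clifford
  relations), completed w.r.t. the degree in R1, R2, has a unique normal form
  as a formal sum of terms  c * Q1^a * Q2^b * r_w  with c real, a, b in {0,1}
  and w a word in the eight split variables (R_j = (sum of the four r's of j) * Q_j).
  An element is represented by its coefficient function  w, (a,b) |-> c.
\<close>

type_synonym letter = "bool \<times> bool \<times> bool"
type_synonym word = "letter list"
type_synonym elem = "word \<Rightarrow> bool \<times> bool \<Rightarrow> real"

definition cnt1 :: "word \<Rightarrow> nat" where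
  "cnt1 w = length (filter (\<lambda>l. fst (snd l)) w)"

definition cnt2 :: "word \<Rightarrow> nat" where
  "cnt2 w = length (filter (\<lambda>l. snd (snd l)) w)"

text \<open>sign exponent for  r_w * Q1^c Q2^d = +- Q1^c Q2^d * r_w\<close>
definition swap_par :: "word \<Rightarrow> bool \<times> bool \<Rightarrow> nat" where
  "swap_par w q = (if fst q then cnt1 w else 0) + (if snd q then cnt2 w else 0)"

text \<open>sign exponent for  (Q1^a Q2^b)(Q1^c Q2^d) = +- Q1^(a xor c) Q2^(b xor d)\<close>
definition qpar :: "bool \<times> bool \<Rightarrow> bool \<times> bool \<Rightarrow> nat" where
  "qpar p q = (if snd p \<and> fst q then 1 else 0) + (if fst p \<and> fst q then 1 else 0)
             + (if snd p \<and> snd q then 1 else 0)"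

definition el_mult :: "elem \<Rightarrow> elem \<Rightarrow> elem" where
  "el_mult X Y = (\<lambda>u p. \<Sum>k\<le>length u. \<Sum>q\<in>(UNIV :: (bool \<times> bool) set).
      (let c = (fst q \<noteq> fst p, snd q \<noteq> snd p) in
        (-1::real) ^ (qpar q c + swap_par (take k u) c) * X (take k u) q * Y (drop k u) c))"

definition el_add :: "elem \<Rightarrow> elem \<Rightarrow> elem" where
  "el_add X Y = (\<lambda>u p. X u p + Y u p)"

definition el_scale :: "real \<Rightarrow> elem \<Rightarrow> elem" where
  "el_scale c X = (\<lambda>u p. c * X u p)"

definition el_zero :: elem where
  "el_zero = (\<lambda>u p. 0)"

definition el_one :: elem where
  "el_one = (\<lambda>u p. if u = [] \<and> p = (False, False) then 1 else 0)"

definition el_Q1 :: elem where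
  "el_Q1 = (\<lambda>u p. if u = [] \<and> p = (True, False) then 1 else 0)"

definition el_Q2 :: elem where
  "el_Q2 = (\<lambda>u p. if u = [] \<and> p = (False, True) then 1 else 0)"

definition el_r :: "letter \<Rightarrow> elem" where
  "el_r l = (\<lambda>u p. if u = [l] \<and> p = (False, False) then 1 else 0)"

definition el_inv :: "elem \<Rightarrow> elem" where
  "el_inv X = (THE Y. el_mult X Y = el_one \<and> el_mult Y X = el_one)"

definition half0 :: "elem \<Rightarrow> elem \<Rightarrow> elem" where
  "half0 Q X = el_scale (1/2) (el_add X (el_mult (el_mult (el_inv Q) X) Q))"

definition half1 :: "elem \<Rightarrow> elem \<Rightarrow> elem" where
  "half1 Q X = el_scale (1/2) (el_add X (el_scale (-1) (el_mult (el_mult (el_inv Q) X) Q)))"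

text \<open>A formal real noncommutative power series in r_1..r_8 is a coefficient
  function on words; the scalar FQ operation f_0(r_1,...,r_8) is the element
  sum_w f_0(w) r_w.\<close>
type_synonym series = "word \<Rightarrow> real"

definition fq_scalar :: "series \<Rightarrow> elem" where
  "fq_scalar f = (\<lambda>u p. if p = (False, False) then f u else 0)"

definition homogeneous :: "nat \<Rightarrow> series \<Rightarrow> bool" where
  "homogeneous i f \<longleftrightarrow> (\<forall>w. length w \<noteq> i \<longrightarrow> f w = 0)"

definition Psi1 :: "series \<Rightarrow> elem" where
  "Psi1 f1 = el_mult (fq_scalar f1) el_Q1"

definition Psi2 :: "series \<Rightarrow> elem" where
  "Psi2 f2 = el_mult (fq_scalar f2) el_Q2"

definition clifford_conservative :: "series \<Rightarrow> series \<Rightarrow> bool" where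
  "clifford_conservative f1 f2 \<longleftrightarrow> f1 [] = 1 \<and> f2 [] = 1"

definition clifford_productive :: "series \<Rightarrow> series \<Rightarrow> bool" where
  "clifford_productive f1 f2 \<longleftrightarrow>
     el_mult (Psi1 f1) (Psi1 f1) = el_scale (-1) el_one \<and>
     el_mult (Psi2 f2) (Psi2 f2) = el_scale (-1) el_one \<and>
     el_add (el_mult (Psi1 f1) (Psi2 f2)) (el_mult (Psi2 f2) (Psi1 f1)) = el_zero"

primrec Pprod :: "(nat \<Rightarrow> series) \<Rightarrow> nat \<Rightarrow> elem" where
  "Pprod U 0 = el_one"
| "Pprod U (Suc n) = el_mult (el_add el_one (fq_scalar (U (Suc n)))) (Pprod U n)"

primrec Pinv :: "(nat \<Rightarrow> series) \<Rightarrow> nat \<Rightarrow> elem" where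
  "Pinv U 0 = el_one"
| "Pinv U (Suc n) = el_mult (Pinv U n) (el_inv (el_add el_one (fq_scalar (U (Suc n)))))"

definition conj_partial :: "(nat \<Rightarrow> series) \<Rightarrow> nat \<Rightarrow> elem \<Rightarrow> elem" where
  "conj_partial U n Q = el_mult (el_mult (Pprod U n) Q) (Pinv U n)"

definition formal_limit :: "(nat \<Rightarrow> elem) \<Rightarrow> elem \<Rightarrow> bool" where
  "formal_limit S X \<longleftrightarrow> (\<forall>u p. eventually (\<lambda>n. S n u p = X u p) sequentially)"

definition represents :: "(nat \<Rightarrow> series) \<Rightarrow> series \<Rightarrow> series \<Rightarrow> bool" where
  "represents U f1 f2 \<longleftrightarrow>
     formal_limit (\<lambda>n. conj_partial U n el_Q1) (Psi1 f1) \<and>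
     formal_limit (\<lambda>n. conj_partial U n el_Q2) (Psi2 f2)"

definition admissible :: "(nat \<Rightarrow> series) \<Rightarrow> bool" where
  "admissible U \<longleftrightarrow> (\<forall>i\<ge>1. homogeneous i (U i))"

definition normalized :: "(nat \<Rightarrow> series) \<Rightarrow> bool" where
  "normalized U \<longleftrightarrow> (\<forall>i\<ge>1. half0 el_Q2 (half0 el_Q1 (fq_scalar (U i))) = el_zero)"

end

theory Submission
  imports Defs
begin


definition gx :: "bool\<times>bool \<Rightarrow> bool\<times>bool \<Rightarrow> bool\<times>bool" where
  "gx q c = (fst q \<noteq> fst c, snd q \<noteq> snd c)"
definition kap :: "bool\<times>bool \<Rightarrow> bool\<times>bool \<Rightarrow> real" where
  "kap q c = (-1)^qpar q c"
definition e1 :: "word \<Rightarrow> real" where "e1 w = (-1)^cnt1 w"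
definition e2 :: "word \<Rightarrow> real" where "e2 w = (-1)^cnt2 w"
definition eps :: "word \<Rightarrow> bool\<times>bool \<Rightarrow> real" where
  "eps w c = (if fst c then e1 w else 1) * (if snd c then e2 w else 1)"

lemma e1_app[simp]: "e1 (a@b) = e1 a * e1 b" by (simp add: e1_def cnt1_def power_add)
lemma e2_app[simp]: "e2 (a@b) = e2 a * e2 b" by (simp add: e2_def cnt2_def power_add)
lemma e1_sq[simp]: "e1 w * e1 w = 1" by (simp add: e1_def flip: power_add)
lemma e2_sq[simp]: "e2 w * e2 w = 1" by (simp add: e2_def flip: power_add)
lemma e1_Nil[simp]: "e1 [] = 1" by (simp add: e1_def cnt1_def)
lemma e2_Nil[simp]: "e2 [] = 1" by (simp add: e2_def cnt2_def)

lemma eps_app: "eps (a@b) c = eps a c * eps b c" by (simp add: eps_def)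
lemma eps_gx: "eps w c * eps w d = eps w (gx c d)"
  by (cases c; cases d) (auto simp: eps_def gx_def algebra_simps)
lemma kap_cocycle: "kap (gx a b) d * kap a b = kap a (gx b d) * kap b d"
  by (cases a; cases b; cases d) (auto simp: kap_def gx_def qpar_def)
lemma gx_assoc: "gx (gx a b) c = gx a (gx b c)" by (auto simp: gx_def)
lemma gx_simps[simp]: "gx a a = (False,False)" "gx (False,False) a = a"
  "gx a (False,False) = a" "gx a (gx a b) = b" "gx (gx a q) (gx a p) = gx q p"
  by (auto simp: gx_def prod_eq_iff)
lemma gx_comm: "gx a b = gx b a" by (auto simp: gx_def)

lemma mult_alt: "el_mult X Y u p = (\<Sum>k\<le>length u. \<Sum>q\<in>UNIV. kap q (gx q p) * eps (take k u) (gx q p) * X (take k u) q * Y (drop k u) (gx q p))"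
  unfolding el_mult_def Let_def
  apply (rule sum.cong, simp)+
  apply (simp add: kap_def eps_def gx_def swap_par_def e1_def e2_def power_add)
  done


lemma sum_gx_reindex: "(\<Sum>c\<in>UNIV. f c) = (\<Sum>q\<in>UNIV. f (gx a q))"
  by (rule sum.reindex_bij_witness[where i="gx a" and j="gx a"]) auto

lemma sign_core: "kap q (gx q p) * eps (A@B) (gx q p) * (kap q' (gx q' q) * eps A (gx q' q)) =
   kap q' (gx q' p) * eps A (gx q' p) * (kap (gx q' q) (gx q p) * eps B (gx q p))"
proof -
  have g1: "gx (gx q p) (gx q' q) = gx q' p" by (auto simp: gx_def prod_eq_iff)
  have 1: "eps A (gx q p) * eps A (gx q' q) = eps A (gx q' p)" using eps_gx g1 by metis
  have g2: "gx (gx q' q) (gx q p) = gx q' p" by (auto simp: gx_def prod_eq_iff)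
  have 2: "kap q (gx q p) * kap q' (gx q' q) = kap q' (gx q' p) * kap (gx q' q) (gx q p)"
    using kap_cocycle[of q' "gx q' q" "gx q p"] g2 by simp
  have "kap q (gx q p) * eps (A@B) (gx q p) * (kap q' (gx q' q) * eps A (gx q' q))
     = (kap q (gx q p) * kap q' (gx q' q)) * (eps A (gx q p) * eps A (gx q' q)) * eps B (gx q p)"
    by (simp add: eps_app algebra_simps)
  also have "\<dots> = kap q' (gx q' p) * kap (gx q' q) (gx q p) * eps A (gx q' p) * eps B (gx q p)"
    using 1 2 by simp
  finally show ?thesis by (simp add: algebra_simps)
qed

lemma triangle2: "(\<Sum>k\<le>n. \<Sum>j\<le>k. G j (k-j)) = (\<Sum>j\<le>(n::nat). \<Sum>i\<le>n-j. G j i)"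
proof -
  have "(\<Sum>k\<le>n. \<Sum>j\<le>k. G j (k-j)) = (\<Sum>(j,i)\<in>{(j,i). j+i\<le>n}. G j i)"
    by (rule sum.triangle_reindex_eq[symmetric])
  also have "{(j,i). j+i\<le>n} = Sigma {..n} (\<lambda>j. {..n-j})" by auto
  also have "(\<Sum>(j,i)\<in>Sigma {..n} (\<lambda>j. {..n-j}). G j i) = (\<Sum>j\<le>n. \<Sum>i\<le>n-j. G j i)"
    by (rule sum.Sigma[symmetric]) auto
  finally show ?thesis .
qed

lemma mult_assoc: "el_mult (el_mult X Y) Z = el_mult X (el_mult Y Z)"
proof (intro ext)
  fix u :: word and p :: "bool\<times>bool"
  define n where "n = length u"
  define G where "G j i = (\<Sum>q\<in>UNIV. \<Sum>q'\<in>UNIV. kap q' (gx q' p) * eps (take j u) (gx q' p) * X (take j u) q' *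
     (kap (gx q' q) (gx q p) * eps (take i (drop j u)) (gx q p) * Y (take i (drop j u)) (gx q' q) * Z (drop i (drop j u)) (gx q p)))" for j i
  have L: "el_mult (el_mult X Y) Z u p = (\<Sum>k\<le>n. \<Sum>j\<le>k. G j (k-j))"
    unfolding mult_alt[of _ _ u] n_def
  proof (rule sum.cong[OF refl])
    fix k assume k: "k \<in> {..length u}"
    have "(\<Sum>q\<in>UNIV. kap q (gx q p) * eps (take k u) (gx q p) *
          (\<Sum>j\<le>length (take k u). \<Sum>q'\<in>UNIV. kap q' (gx q' q) * eps (take j (take k u)) (gx q' q) * X (take j (take k u)) q' * Y (drop j (take k u)) (gx q' q)) *
          Z (drop k u) (gx q p))
        = (\<Sum>q\<in>UNIV. \<Sum>j\<le>k. \<Sum>q'\<in>UNIV. kap q (gx q p) * eps (take k u) (gx q p) *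
          (kap q' (gx q' q) * eps (take j (take k u)) (gx q' q) * X (take j (take k u)) q' * Y (drop j (take k u)) (gx q' q)) *
          Z (drop k u) (gx q p))"
      using k by (simp add: sum_distrib_left sum_distrib_right min_def)
    also have "\<dots> = (\<Sum>j\<le>k. \<Sum>q\<in>UNIV. \<Sum>q'\<in>UNIV. kap q (gx q p) * eps (take k u) (gx q p) *
          (kap q' (gx q' q) * eps (take j (take k u)) (gx q' q) * X (take j (take k u)) q' * Y (drop j (take k u)) (gx q' q)) *
          Z (drop k u) (gx q p))"
      by (rule sum.swap)
    also have "\<dots> = (\<Sum>j\<le>k. G j (k-j))"
      unfolding G_def
    proof (intro sum.cong refl)
      fix j q q' assume j: "j \<in> {..k}"
      define i where "i = k - j"
      have kk: "k = j + i" using j i_def by auto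
      have t1: "take j (take k u) = take j u" using j by (simp add: min_def)
      have t2: "drop j (take k u) = take i (drop j u)" by (simp add: kk take_drop add.commute)
      have t3: "drop k u = drop i (drop j u)" by (simp add: kk add.commute)
      have t4: "take k u = take j u @ take i (drop j u)" by (simp add: kk take_add)
      show "kap q (gx q p) * eps (take k u) (gx q p) *
          (kap q' (gx q' q) * eps (take j (take k u)) (gx q' q) * X (take j (take k u)) q' * Y (drop j (take k u)) (gx q' q)) *
          Z (drop k u) (gx q p) =
         kap q' (gx q' p) * eps (take j u) (gx q' p) * X (take j u) q' *
     (kap (gx q' q) (gx q p) * eps (take (k-j) (drop j u)) (gx q p) * Y (take (k-j) (drop j u)) (gx q' q) * Z (drop (k-j) (drop j u)) (gx q p))"
        unfolding t1 t2 t3 i_def[symmetric] unfolding t4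
      proof -
        have S: "kap q (gx q p) * eps (take j u @ take i (drop j u)) (gx q p) * (kap q' (gx q' q) * eps (take j u) (gx q' q)) *
          (X (take j u) q' * Y (take i (drop j u)) (gx q' q) * Z (drop i (drop j u)) (gx q p)) =
          kap q' (gx q' p) * eps (take j u) (gx q' p) * (kap (gx q' q) (gx q p) * eps (take i (drop j u)) (gx q p)) *
          (X (take j u) q' * Y (take i (drop j u)) (gx q' q) * Z (drop i (drop j u)) (gx q p))"
          by (simp only: sign_core)
        then show "kap q (gx q p) * eps (take j u @ take i (drop j u)) (gx q p) *
    (kap q' (gx q' q) * eps (take j u) (gx q' q) * X (take j u) q' *
     Y (take i (drop j u)) (gx q' q)) *
    Z (drop i (drop j u)) (gx q p) =
    kap q' (gx q' p) * eps (take j u) (gx q' p) * X (take j u) q' *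
    (kap (gx q' q) (gx q p) * eps (take i (drop j u)) (gx q p) *
     Y (take i (drop j u)) (gx q' q) *
     Z (drop i (drop j u)) (gx q p))" by (simp only: mult_ac)
      qed
    qed
    finally show "(\<Sum>q\<in>UNIV. kap q (gx q p) * eps (take k u) (gx q p) *
          el_mult X Y (take k u) q * Z (drop k u) (gx q p)) = (\<Sum>j\<le>k. G j (k-j))"
      by (simp add: mult_alt)
  qed
  have R: "el_mult X (el_mult Y Z) u p = (\<Sum>j\<le>n. \<Sum>i\<le>n-j. G j i)"
    unfolding mult_alt[of X _ u] n_def
  proof (rule sum.cong[OF refl])
    fix j assume j: "j \<in> {..length u}"
    have "(\<Sum>q'\<in>UNIV. kap q' (gx q' p) * eps (take j u) (gx q' p) * X (take j u) q' * el_mult Y Z (drop j u) (gx q' p))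
     = (\<Sum>q'\<in>UNIV. kap q' (gx q' p) * eps (take j u) (gx q' p) * X (take j u) q' *
          (\<Sum>i\<le>length u - j. \<Sum>q\<in>UNIV. kap (gx q' q) (gx q p) * eps (take i (drop j u)) (gx q p) * Y (take i (drop j u)) (gx q' q) * Z (drop i (drop j u)) (gx q p)))"
    proof (rule sum.cong[OF refl])
      fix q' 
      show "kap q' (gx q' p) * eps (take j u) (gx q' p) * X (take j u) q' * el_mult Y Z (drop j u) (gx q' p) =
        kap q' (gx q' p) * eps (take j u) (gx q' p) * X (take j u) q' *
          (\<Sum>i\<le>length u - j. \<Sum>q\<in>UNIV. kap (gx q' q) (gx q p) * eps (take i (drop j u)) (gx q p) * Y (take i (drop j u)) (gx q' q) * Z (drop i (drop j u)) (gx q p))"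
        unfolding mult_alt[of Y]
        apply (simp only: length_drop)
        apply (subst sum_gx_reindex[where a=q'])
        apply simp
        done
    qed
    also have "\<dots> = (\<Sum>q'\<in>UNIV. \<Sum>i\<le>length u - j. \<Sum>q\<in>UNIV. kap q' (gx q' p) * eps (take j u) (gx q' p) * X (take j u) q' *
          (kap (gx q' q) (gx q p) * eps (take i (drop j u)) (gx q p) * Y (take i (drop j u)) (gx q' q) * Z (drop i (drop j u)) (gx q p)))"
      by (simp add: sum_distrib_left)
    also have "\<dots> = (\<Sum>i\<le>length u - j. \<Sum>q'\<in>UNIV. \<Sum>q\<in>UNIV. kap q' (gx q' p) * eps (take j u) (gx q' p) * X (take j u) q' *
          (kap (gx q' q) (gx q p) * eps (take i (drop j u)) (gx q p) * Y (take i (drop j u)) (gx q' q) * Z (drop i (drop j u)) (gx q p)))"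
      by (rule sum.swap)
    also have "\<dots> = (\<Sum>i\<le>length u - j. G j i)"
      unfolding G_def by (intro sum.cong refl sum.swap)
    finally show "(\<Sum>q'\<in>UNIV. kap q' (gx q' p) * eps (take j u) (gx q' p) * X (take j u) q' * el_mult Y Z (drop j u) (gx q' p))
      = (\<Sum>i\<le>length u - j. G j i)" .
  qed
  show "el_mult (el_mult X Y) Z u p = el_mult X (el_mult Y Z) u p"
    using L R triangle2 by simp
qed



definition supp0 :: "elem \<Rightarrow> bool" where "supp0 X \<longleftrightarrow> (\<forall>w q. w \<noteq> [] \<longrightarrow> X w q = 0)"

lemma eps_Nil[simp]: "eps [] c = 1" by (simp add: eps_def e1_def e2_def cnt1_def cnt2_def)

lemma mult_const_left: assumes "supp0 X"
  shows "el_mult X Y u p = (\<Sum>q\<in>UNIV. kap q (gx q p) * X [] q * Y u (gx q p))"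
proof -
  define f where "f k = (\<Sum>q\<in>UNIV. kap q (gx q p) * eps (take k u) (gx q p) * X (take k u) q * Y (drop k u) (gx q p))" for k
  have Z: "\<forall>k\<in>{..length u}-{0}. f k = 0"
  proof
    fix k assume k: "k \<in> {..length u} - {0}"
    then have "take k u \<noteq> []" by auto
    then have H: "\<forall>q. X (take k u) q = 0" using assms by (auto simp: supp0_def)
    show "f k = 0" unfolding f_def by (simp add: H)
  qed
  have "el_mult X Y u p = sum f {..length u}" unfolding f_def by (rule mult_alt)
  also have "\<dots> = f 0 + sum f ({..length u} - {0})" by (rule sum.remove) auto
  also have "\<dots> = f 0" using Z by simp
  finally show ?thesis by (simp add: f_def)
qed

lemma mult_const_right: assumes "supp0 Y"
  shows "el_mult X Y u p = (\<Sum>q\<in>UNIV. kap q (gx q p) * eps u (gx q p) * X u q * Y [] (gx q p))"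
proof -
  define f where "f k = (\<Sum>q\<in>UNIV. kap q (gx q p) * eps (take k u) (gx q p) * X (take k u) q * Y (drop k u) (gx q p))" for k
  have Z: "\<forall>k\<in>{..length u}-{length u}. f k = 0"
  proof
    fix k assume k: "k \<in> {..length u} - {length u}"
    then have "drop k u \<noteq> []" by auto
    then have H: "\<forall>q. Y (drop k u) q = 0" using assms by (auto simp: supp0_def)
    show "f k = 0" unfolding f_def by (simp add: H)
  qed
  have "el_mult X Y u p = sum f {..length u}" unfolding f_def by (rule mult_alt)
  also have "\<dots> = f (length u) + sum f ({..length u} - {length u})" by (rule sum.remove) auto
  also have "\<dots> = f (length u)" using Z by simp
  finally show ?thesis by (simp add: f_def)
qed

lemma sum_UNIV_bb: "(\<Sum>q\<in>(UNIV::(bool\<times>bool) set). f q) = f (False,False) + f (False,True) + f (True,False) + f (True,True)"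
proof -
  have "(UNIV::(bool\<times>bool) set) = {(False,False),(False,True),(True,False),(True,True)}" (is "_ = ?S") by auto
  note U = this
  show ?thesis by (subst U) (simp add: add.assoc)
qed

lemma supp0_one[simp]: "supp0 el_one" by (simp add: supp0_def el_one_def)
lemma supp0_Q1[simp]: "supp0 el_Q1" by (simp add: supp0_def el_Q1_def)
lemma supp0_Q2[simp]: "supp0 el_Q2" by (simp add: supp0_def el_Q2_def)

lemma kap_simps[simp]: "kap (False,False) c = 1" "kap q (False,False) = 1"
  by (auto simp: kap_def qpar_def)
lemma eps_00[simp]: "eps w (False,False) = 1" by (simp add: eps_def)

lemma mult_one_left[simp]: "el_mult el_one X = X"
  by (intro ext) (simp only: mult_const_left[OF supp0_one], simp add: sum_UNIV_bb el_one_def)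
lemma mult_one_right[simp]: "el_mult X el_one = X"
  by (intro ext) (simp only: mult_const_right[OF supp0_one], auto simp add: sum_UNIV_bb el_one_def gx_def eps_def)

lemma mult_add_left: "el_mult (el_add X Y) Z = el_add (el_mult X Z) (el_mult Y Z)"
  unfolding el_mult_def el_add_def Let_def
  by (intro ext) (simp add: distrib_left distrib_right sum.distrib)
lemma mult_add_right: "el_mult Z (el_add X Y) = el_add (el_mult Z X) (el_mult Z Y)"
  unfolding el_mult_def el_add_def Let_def
  by (intro ext) (simp add: distrib_left distrib_right sum.distrib)



lemma el_add_assoc: "el_add (el_add a b) c = el_add a (el_add b c)" by (simp add: el_add_def fun_eq_iff)
lemma el_add_comm: "el_add a b = el_add b a" by (simp add: el_add_def fun_eq_iff)
lemma el_add_zero: "el_add el_zero a = a" by (simp add: el_add_def el_zero_def fun_eq_iff)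
lemma el_add_neg: "el_add (el_scale (-1) a) a = el_zero" by (simp add: el_add_def el_zero_def el_scale_def fun_eq_iff)
lemma el_zero_one: "el_zero \<noteq> el_one"
proof
  assume "el_zero = el_one"
  then have "el_zero [] (False,False) = el_one [] (False,False)" by simp
  then show False by (simp add: el_zero_def el_one_def)
qed

typedef alg = "UNIV :: elem set" morphisms rep abs by auto
setup_lifting type_definition_alg

instantiation alg :: ring_1 begin
lift_definition zero_alg :: alg is el_zero .
lift_definition one_alg :: alg is el_one .
lift_definition plus_alg :: "alg \<Rightarrow> alg \<Rightarrow> alg" is el_add .
lift_definition minus_alg :: "alg \<Rightarrow> alg \<Rightarrow> alg" is "\<lambda>X Y. el_add X (el_scale (-1) Y)" .
lift_definition uminus_alg :: "alg \<Rightarrow> alg" is "el_scale (-1)" .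
lift_definition times_alg :: "alg \<Rightarrow> alg \<Rightarrow> alg" is el_mult .
instance
proof
  fix a b c :: alg
  show "a * b * c = a * (b * c)" by transfer (rule mult_assoc)
  show "a + b + c = a + (b + c)" by transfer (rule el_add_assoc)
  show "a + b = b + a" by transfer (rule el_add_comm)
  show "0 + a = a" by transfer (rule el_add_zero)
  show "- a + a = 0" by transfer (rule el_add_neg)
  show "a - b = a + - b" by transfer (rule refl)
  show "1 * a = a" by transfer (rule mult_one_left)
  show "a * 1 = a" by transfer (rule mult_one_right)
  show "(a + b) * c = a * c + b * c" by transfer (rule mult_add_left)
  show "a * (b + c) = a * b + a * c" by transfer (rule mult_add_right)
  show "(0::alg) \<noteq> 1" by transfer (rule el_zero_one)
qed
end


lemma rep_mult: "rep (x*y) = el_mult (rep x) (rep y)" by (simp add: times_alg.rep_eq)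
lemma rep_add: "rep (x+y) u p = rep x u p + rep y u p" by (simp add: plus_alg.rep_eq el_add_def)
lemma rep_minus: "rep (x-y) u p = rep x u p - rep y u p" by (simp add: minus_alg.rep_eq el_add_def el_scale_def)
lemma rep_uminus: "rep (-x) u p = - rep x u p" by (simp add: uminus_alg.rep_eq el_scale_def)
lemma rep_zero: "rep 0 u p = 0" by (simp add: zero_alg.rep_eq el_zero_def)
lemma rep_one: "rep 1 u p = (if u = [] \<and> p = (False,False) then 1 else 0)" by (simp add: one_alg.rep_eq el_one_def)
lemma rep_abs[simp]: "rep (abs X) = X" by (simp add: abs_inverse)
lemmas rep_simps = rep_add rep_minus rep_uminus rep_zero

lemma alg_eqI: "(\<And>u p. rep x u p = rep y u p) \<Longrightarrow> x = y"
  by (metis rep_inject ext)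

definition Q1a :: alg where "Q1a = abs el_Q1"
definition Q2a :: alg where "Q2a = abs el_Q2"
definition sc :: "series \<Rightarrow> alg" where "sc f = abs (fq_scalar f)"

definition hg :: "bool\<times>bool \<Rightarrow> alg \<Rightarrow> bool" where "hg a x \<longleftrightarrow> (\<forall>u p. p \<noteq> a \<longrightarrow> rep x u p = 0)"
definition ordge :: "nat \<Rightarrow> alg \<Rightarrow> bool" where "ordge n x \<longleftrightarrow> (\<forall>u p. length u < n \<longrightarrow> rep x u p = 0)"

lemma rep_Q1_left: "rep (Q1a * x) u p = kap (True,False) (gx (True,False) p) * rep x u (gx (True,False) p)"
  unfolding rep_mult Q1a_def rep_abs mult_const_left[OF supp0_Q1] sum_UNIV_bb
  by (cases p) (auto simp: el_Q1_def gx_def)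
lemma rep_Q2_left: "rep (Q2a * x) u p = kap (False,True) (gx (False,True) p) * rep x u (gx (False,True) p)"
  unfolding rep_mult Q2a_def rep_abs mult_const_left[OF supp0_Q2] sum_UNIV_bb
  by (cases p) (auto simp: el_Q2_def gx_def)
lemma rep_Q1_right: "rep (x * Q1a) u p = kap (gx (True,False) p) (True,False) * e1 u * rep x u (gx (True,False) p)"
  unfolding rep_mult Q1a_def rep_abs mult_const_right[OF supp0_Q1] sum_UNIV_bb
  by (cases p) (auto simp: el_Q1_def gx_def eps_def)
lemma rep_Q2_right: "rep (x * Q2a) u p = kap (gx (False,True) p) (False,True) * e2 u * rep x u (gx (False,True) p)"
  unfolding rep_mult Q2a_def rep_abs mult_const_right[OF supp0_Q2] sum_UNIV_bb
  by (cases p) (auto simp: el_Q2_def gx_def eps_def)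

lemma rep_Q1: "rep Q1a u p = (if u = [] \<and> p = (True,False) then 1 else 0)" by (simp add: Q1a_def el_Q1_def)
lemma rep_Q2: "rep Q2a u p = (if u = [] \<and> p = (False,True) then 1 else 0)" by (simp add: Q2a_def el_Q2_def)
lemma rep_sc: "rep (sc f) u p = (if p = (False,False) then f u else 0)" by (simp add: sc_def fq_scalar_def)

lemma Q1_sq: "Q1a * Q1a = -1"
  by (rule alg_eqI) (auto simp: rep_Q1_left rep_Q1 rep_uminus rep_one gx_def kap_def qpar_def)
lemma Q2_sq: "Q2a * Q2a = -1"
  by (rule alg_eqI) (auto simp: rep_Q2_left rep_Q2 rep_uminus rep_one gx_def kap_def qpar_def)
lemma Q12_anti: "Q1a * Q2a = - (Q2a * Q1a)"
  by (rule alg_eqI) (auto simp: rep_Q1_left rep_Q2_left rep_Q1 rep_Q2 rep_uminus gx_def kap_def qpar_def)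

lemma hg_mult: assumes "hg a x" "hg b y" shows "hg (gx a b) (x*y)"
  unfolding hg_def
proof (intro allI impI)
  fix u p assume p: "p \<noteq> gx a b"
  have Z: "\<And>k q. rep x (take k u) q * rep y (drop k u) (gx q p) = 0"
  proof -
    fix k q
    show "rep x (take k u) q * rep y (drop k u) (gx q p) = 0"
    proof (cases "q = a")
      case True
      then have "gx q p \<noteq> b" using p by (auto simp: gx_def prod_eq_iff)
      then have "rep y (drop k u) (gx q p) = 0" using assms(2) unfolding hg_def by blast
      then show ?thesis by simp
    next
      case False
      then have "rep x (take k u) q = 0" using assms(1) unfolding hg_def by blast
      then show ?thesis by simp
    qed
  qed
  show "rep (x*y) u p = 0" unfolding rep_mult mult_alt
    by (intro sum.neutral ballI) (metis (no_types) Z atMost_iff mult.assoc mult_zero_right)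
qed

lemma ordge_mult: assumes "ordge m x" "ordge n y" shows "ordge (m+n) (x*y)"
  unfolding ordge_def
proof (intro allI impI)
  fix u :: word and p assume u: "length u < m + n"
  have Z: "\<And>k q. k \<le> length u \<Longrightarrow> rep x (take k u) q * rep y (drop k u) (gx q p) = 0"
  proof -
    fix k q assume k: "k \<le> length u"
    show "rep x (take k u) q * rep y (drop k u) (gx q p) = 0"
    proof (cases "k < m")
      case True
      then have "rep x (take k u) q = 0" using assms(1)[unfolded ordge_def, rule_format, of "take k u" q] k by simp
      then show ?thesis by simp
    next
      case False
      then have "rep y (drop k u) (gx q p) = 0" using assms(2)[unfolded ordge_def, rule_format, of "drop k u" "gx q p"] k u by simp
      then show ?thesis by simp
    qed
  qed
  show "rep (x*y) u p = 0" unfolding rep_mult mult_alt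
    by (intro sum.neutral ballI) (metis (no_types) Z atMost_iff mult.assoc mult_zero_right)
qed

lemma hg_add: "hg a x \<Longrightarrow> hg a y \<Longrightarrow> hg a (x+y)" by (simp add: hg_def rep_add)
lemma hg_diff: "hg a x \<Longrightarrow> hg a y \<Longrightarrow> hg a (x-y)" by (simp add: hg_def rep_minus)
lemma hg_uminus: "hg a x \<Longrightarrow> hg a (-x)" by (simp add: hg_def rep_uminus)
lemma hg_zero: "hg a 0" by (simp add: hg_def rep_zero)
lemma hg_one: "hg (False,False) 1" by (simp add: hg_def rep_one)
lemma hg_sc: "hg (False,False) (sc f)" by (simp add: hg_def rep_sc)
lemma hg_Q1: "hg (True,False) Q1a" by (simp add: hg_def rep_Q1)
lemma hg_Q2: "hg (False,True) Q2a" by (simp add: hg_def rep_Q2)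
lemma hg_mult0: "hg (False,False) x \<Longrightarrow> hg (False,False) y \<Longrightarrow> hg (False,False) (x*y)"
  using hg_mult[of "(False,False)" x "(False,False)" y] by simp
lemma hg_power0: "hg (False,False) x \<Longrightarrow> hg (False,False) (x^n)"
  by (induction n) (auto simp: hg_one hg_mult0)
lemma hg_sum0: "(\<And>k. hg (False,False) (f k)) \<Longrightarrow> hg (False,False) (\<Sum>k<(n::nat). f k)"
  by (induction n) (auto simp: hg_add hg_zero)

lemma ordge_add: "ordge n x \<Longrightarrow> ordge n y \<Longrightarrow> ordge n (x+y)" by (simp add: ordge_def rep_add)
lemma ordge_diff: "ordge n x \<Longrightarrow> ordge n y \<Longrightarrow> ordge n (x-y)" by (simp add: ordge_def rep_minus)
lemma ordge_uminus: "ordge n x \<Longrightarrow> ordge n (-x)" by (simp add: ordge_def rep_uminus)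
lemma ordge_zero: "ordge n 0" by (simp add: ordge_def rep_zero)
lemma ordge_0: "ordge 0 x" by (simp add: ordge_def)
lemma ordge_mono: "ordge n x \<Longrightarrow> m \<le> n \<Longrightarrow> ordge m x" by (simp add: ordge_def)
lemma ordge_mult_left: "ordge n y \<Longrightarrow> ordge n (x*y)" using ordge_mult[OF ordge_0, of n y x] by simp
lemma ordge_mult_right: "ordge n x \<Longrightarrow> ordge n (x*y)" using ordge_mult[OF _ ordge_0, of n x y] by simp
lemma ordge_all_zero: "(\<And>n. ordge n x) \<Longrightarrow> x = 0"
  by (rule alg_eqI) (auto simp: ordge_def rep_zero)
lemma ordge_power: "ordge 1 z \<Longrightarrow> ordge n (z^n)"
proof (induction n)
  case 0 show ?case by (simp add: ordge_0)
next
  case (Suc n) then show ?case using ordge_mult[of 1 z n "z^n"] by simp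
qed
lemma ordge_sum: "(\<And>k. k \<in> A \<Longrightarrow> ordge n (f k)) \<Longrightarrow> ordge n (sum f A)"
  by (induction A rule: infinite_finite_induct) (auto simp: ordge_zero ordge_add)
lemma ordge_prod_cong: "ordge n (x - x') \<Longrightarrow> ordge n (y - y') \<Longrightarrow> ordge n (x*y - x'*y')"
proof -
  assume a: "ordge n (x - x')" "ordge n (y - y')"
  have "x*y - x'*y' = (x - x')*y + x'*(y - y')" by (simp add: algebra_simps)
  then show ?thesis using a by (simp add: ordge_add ordge_mult_left ordge_mult_right)
qed



declare split_paired_All[simp del] split_paired_Ex[simp del]

definition cauchy :: "(nat \<Rightarrow> alg) \<Rightarrow> bool" where
  "cauchy S \<longleftrightarrow> (\<forall>n m. n \<le> m \<longrightarrow> ordge n (S m - S n))"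
definition alim :: "(nat \<Rightarrow> alg) \<Rightarrow> alg" where
  "alim S = abs (\<lambda>u p. rep (S (Suc (length u))) u p)"

lemma alim_approx: assumes "cauchy S" shows "ordge n (alim S - S n)"
  unfolding ordge_def
proof (intro allI impI)
  fix u :: word and p assume u: "length u < n"
  have "ordge (Suc (length u)) (S n - S (Suc (length u)))" using assms u by (simp add: cauchy_def)
  then have "rep (S n) u p - rep (S (Suc (length u))) u p = 0"
    unfolding ordge_def rep_minus by simp
  then show "rep (alim S - S n) u p = 0" by (simp add: alim_def rep_minus)
qed

lemma alim_hg: "(\<And>n. hg a (S n)) \<Longrightarrow> hg a (alim S)"
  by (simp add: hg_def alim_def)

lemma formal_limitI: assumes "\<And>n. eventually (\<lambda>m. ordge n (L - S m)) sequentially"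
  shows "formal_limit (\<lambda>m. rep (S m)) (rep L)"
  unfolding formal_limit_def
proof (intro allI)
  fix u :: word and p
  show "eventually (\<lambda>m. rep (S m) u p = rep L u p) sequentially"
    using assms[of "Suc (length u)"]
  proof (rule eventually_mono)
    fix m assume "ordge (Suc (length u)) (L - S m)"
    then have "rep (L - S m) u p = 0" by (simp add: ordge_def)
    then show "rep (S m) u p = rep L u p" by (simp add: rep_minus)
  qed
qed

lemma formal_limitD: assumes "formal_limit (\<lambda>m. rep (S m)) (rep L)" "cauchy S"
  shows "ordge n (L - S n)"
  unfolding ordge_def
proof (intro allI impI)
  fix u :: word and p assume u: "length u < n"
  from assms(1) have "eventually (\<lambda>m. rep (S m) u p = rep L u p) sequentially"
    by (simp add: formal_limit_def)
  then obtain N where N: "\<And>m. m \<ge> N \<Longrightarrow> rep (S m) u p = rep L u p"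
    by (auto simp: eventually_sequentially)
  define m where "m = max N n"
  have "ordge n (S m - S n)" using assms(2) by (simp add: cauchy_def m_def)
  then have "rep (S m) u p = rep (S n) u p" using u by (simp add: ordge_def rep_minus)
  moreover have "rep (S m) u p = rep L u p" using N by (simp add: m_def)
  ultimately show "rep (L - S n) u p = 0" by (simp add: rep_minus)
qed

definition unitlike :: "alg \<Rightarrow> bool" where
  "unitlike x \<longleftrightarrow> hg (False,False) x \<and> ordge 1 (x - 1)"

lemma unitlike_mult: assumes "unitlike a" "unitlike b" shows "unitlike (a*b)"
proof -
  have e: "a*b - 1 = (a - 1)*b + (b - 1)" by (simp add: algebra_simps)
  have "ordge 1 ((a - 1)*b + (b - 1))" using assms unfolding unitlike_def
    by (intro ordge_add ordge_mult_right) auto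
  then show ?thesis using assms unfolding e[symmetric] unitlike_def by (simp add: hg_mult0)
qed

lemma unitlike_one: "unitlike 1" by (simp add: unitlike_def hg_one ordge_zero)

lemma pow_comm: "(-z)^n * z = z * (-(z::alg))^n"
  using power_commutes[of "-z" n] by simp

lemma telescope: "(1 + z) * (\<Sum>k<n. (-z)^k) = 1 - (-z)^n \<and> (\<Sum>k<n. (-z)^k) * (1 + z) = 1 - (-(z::alg))^n"
  by (induction n) (auto simp: algebra_simps pow_comm)

lemma inv_exists: assumes "unitlike x" shows "\<exists>y. x*y = 1 \<and> y*x = 1 \<and> unitlike y"
proof -
  define z where "z = x - 1"
  have z1: "ordge 1 z" using assms by (simp add: unitlike_def z_def)
  have mz1: "ordge 1 (-z)" using z1 by (rule ordge_uminus)
  have hz: "hg (False,False) (-z)" using assms by (simp add: unitlike_def z_def hg_diff hg_one hg_uminus)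
  define S where "S m = (\<Sum>k<m. (-z)^k)" for m
  have C: "cauchy S" unfolding cauchy_def
  proof (intro allI impI)
    fix n m :: nat assume nm: "n \<le> m"
    have "S m = S n + (\<Sum>k\<in>{n..<m}. (-z)^k)" unfolding S_def
      using nm by (metis atLeast0LessThan sum.atLeastLessThan_concat zero_le)
    then have "S m - S n = (\<Sum>k\<in>{n..<m}. (-z)^k)" by simp
    also have "ordge n \<dots>"
      by (rule ordge_sum) (use ordge_power[OF mz1] ordge_mono in auto)
    finally show "ordge n (S m - S n)" .
  qed
  define y where "y = alim S"
  have x1: "x = 1 + z" by (simp add: z_def)
  have "\<And>n. ordge n (x*y - 1)"
  proof -
    fix n
    have "x*y - 1 = x*(y - S n) - (-z)^n" using telescope[of z n] by (simp add: x1 S_def algebra_simps)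
    then show "ordge n (x*y - 1)"
      using alim_approx[OF C, of n] ordge_power[OF mz1, of n] by (simp add: y_def ordge_diff ordge_mult_left)
  qed
  then have r: "x*y = 1" using ordge_all_zero by fastforce
  have "\<And>n. ordge n (y*x - 1)"
  proof -
    fix n
    have "y*x - 1 = (y - S n)*x - (-z)^n" using telescope[of z n] by (simp add: x1 S_def algebra_simps)
    then show "ordge n (y*x - 1)"
      using alim_approx[OF C, of n] ordge_power[OF mz1, of n] by (simp add: y_def ordge_diff ordge_mult_right)
  qed
  then have l: "y*x = 1" using ordge_all_zero by fastforce
  have "hg (False,False) y" unfolding y_def S_def by (rule alim_hg, rule hg_sum0, rule hg_power0[OF hz])
  moreover have "ordge 1 (y - 1)" using alim_approx[OF C, of 1] by (simp add: y_def S_def)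
  ultimately show ?thesis using r l by (auto simp: unitlike_def)
qed

definition ainv :: "alg \<Rightarrow> alg" where "ainv x = (THE y. x*y = 1 \<and> y*x = 1)"

lemma inv_unique: "x*y = 1 \<Longrightarrow> y*x = 1 \<Longrightarrow> x*y' = 1 \<Longrightarrow> y'*x = (1::alg) \<Longrightarrow> y = y'"
  by (metis mult.assoc mult_1_left mult_1_right)

lemma ainv_eq: "x*y = 1 \<Longrightarrow> y*x = 1 \<Longrightarrow> ainv x = y"
  unfolding ainv_def by (rule the_equality) (auto intro: inv_unique)

lemma ainv: assumes "unitlike x" shows "x * ainv x = 1" "ainv x * x = 1" "unitlike (ainv x)"
  using inv_exists[OF assms] ainv_eq by auto

lemma el_inv_rep: assumes "x*y = 1" "y*x = 1" shows "el_inv (rep x) = rep y"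
  unfolding el_inv_def
proof (rule the_equality)
  show "el_mult (rep x) (rep y) = el_one \<and> el_mult (rep y) (rep x) = el_one"
    using assms by (metis one_alg.rep_eq rep_mult)
next
  fix Y assume Y: "el_mult (rep x) Y = el_one \<and> el_mult Y (rep x) = el_one"
  have "x * abs Y = 1" "abs Y * x = 1" using Y
    by (metis one_alg.rep_eq rep_abs rep_inject rep_mult)+
  then have "abs Y = y" using assms inv_unique by blast
  then show "Y = rep y" by (metis rep_abs)
qed

lemma ordge_sc: "homogeneous i v \<Longrightarrow> ordge i (sc v)"
  by (simp add: homogeneous_def ordge_def rep_sc)

lemma unitlike_sc: assumes "homogeneous i v" "i \<ge> 1" shows "unitlike (1 + sc v)"
  using ordge_mono[OF ordge_sc[OF assms(1)] assms(2)] by (simp add: unitlike_def hg_add hg_one hg_sc)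



declare split_paired_All[simp del] split_paired_Ex[simp del]

definition PP :: "(nat \<Rightarrow> series) \<Rightarrow> nat \<Rightarrow> alg" where "PP U n = abs (Pprod U n)"
definition PI :: "(nat \<Rightarrow> series) \<Rightarrow> nat \<Rightarrow> alg" where "PI U n = abs (Pinv U n)"
definition CJ :: "(nat \<Rightarrow> series) \<Rightarrow> nat \<Rightarrow> alg \<Rightarrow> alg" where "CJ U n x = PP U n * x * ainv (PP U n)"

lemma rep_1sc: "rep (1 + sc v) = el_add el_one (fq_scalar v)"
  by (simp add: plus_alg.rep_eq one_alg.rep_eq sc_def)

lemma PP_0: "PP U 0 = 1" by (simp add: PP_def one_alg.abs_eq)
lemma PP_Suc: "PP U (Suc n) = (1 + sc (U (Suc n))) * PP U n"
  unfolding PP_def Pprod.simps rep_1sc[symmetric]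
  by (metis rep_abs rep_inverse rep_mult)

lemma ainv_mult: assumes "unitlike a" "unitlike b" shows "ainv (a*b) = ainv b * ainv a"
proof (rule ainv_eq)
  show "a * b * (ainv b * ainv a) = 1" using ainv[OF assms(1)] ainv[OF assms(2)]
    by (metis mult.assoc mult_1_left)
  show "ainv b * ainv a * (a * b) = 1" using ainv[OF assms(1)] ainv[OF assms(2)]
    by (metis mult.assoc mult_1_left)
qed

lemma adm_unitlike: "admissible U \<Longrightarrow> unitlike (1 + sc (U (Suc n)))"
  by (rule unitlike_sc[of "Suc n"]) (auto simp: admissible_def)

lemma PP_PI: assumes "admissible U" shows "unitlike (PP U n) \<and> PI U n = ainv (PP U n)"
proof (induction n)
  case 0
  have "PI U 0 = 1" by (simp add: PI_def one_alg.abs_eq)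
  moreover have "ainv 1 = (1::alg)" by (rule ainv_eq) auto
  ultimately show ?case by (simp add: PP_0 unitlike_one)
next
  case (Suc n)
  let ?a = "1 + sc (U (Suc n))"
  have ua: "unitlike ?a" using adm_unitlike[OF assms] .
  have e: "el_inv (el_add el_one (fq_scalar (U (Suc n)))) = rep (ainv ?a)"
    unfolding rep_1sc[symmetric] by (rule el_inv_rep; rule ainv[OF ua])
  have "PI U (Suc n) = PI U n * ainv ?a"
    unfolding PI_def Pinv.simps e by (metis rep_abs rep_inverse rep_mult)
  also have "\<dots> = ainv (PP U (Suc n))" using Suc ua by (simp add: PP_Suc ainv_mult)
  finally show ?case using Suc ua by (simp add: PP_Suc unitlike_mult)
qed

lemma conj_rep: assumes "admissible U" shows "conj_partial U n X = rep (CJ U n (abs X))"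
proof -
  have "Pinv U n = rep (ainv (PP U n))" using PP_PI[OF assms, of n] by (metis PI_def rep_abs)
  then show ?thesis unfolding conj_partial_def CJ_def by (simp add: rep_mult PP_def)
qed

lemma CJ_Suc: "CJ U (Suc n) x = (1 + sc (U (Suc n))) * CJ U n x * ainv (1 + sc (U (Suc n)))"
  if "admissible U"
  using PP_PI[OF that, of n] adm_unitlike[OF that, of n]
  by (simp add: CJ_def PP_Suc ainv_mult mult.assoc)

lemma ordge_trans: "ordge n (a - b) \<Longrightarrow> ordge n (b - c) \<Longrightarrow> ordge n (a - c)"
  using ordge_add[of n "a-b" "b-c"] by simp

lemma step1: assumes "ordge k V" "(1+V)*W = 1" shows "ordge k ((1+V)*C*W - C)"
proof -
  have "W - 1 = - (V*W)" using assms(2) by (simp add: algebra_simps)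
  then have e: "(1+V)*C*W - C = V*C*W + C*(-(V*W))" by (simp add: algebra_simps flip: \<open>W - 1 = - (V*W)\<close>)
  show ?thesis unfolding e using assms(1)
    by (intro ordge_add ordge_mult_right ordge_mult_left ordge_uminus)
qed

lemma step2: assumes "ordge N V" "N \<ge> 1" "(1+V)*W = 1" "ordge 1 (C - Q)"
  shows "ordge (Suc N) ((1+V)*C*W - (C + V*Q - Q*V))"
proof -
  have e: "(1+V)*C*W - (C + V*Q - Q*V) = V*(C-Q) - (C-Q)*V + C*V*V*W - V*C*V*W - C*(1 - (1+V)*W) - V*C*(1 - (1+V)*W) + C*V*(1 - (1+V)*W)"
    by (simp add: algebra_simps)
  have o1: "ordge (N + 1) (V*(C-Q))" using ordge_mult[OF assms(1) assms(4)] .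
  have o2: "ordge (1 + N) ((C-Q)*V)" using ordge_mult[OF assms(4) assms(1)] .
  have o3: "ordge (N + N) (V*V)" using ordge_mult[OF assms(1) assms(1)] .
  have "ordge (N + N) (C*(V*V)*W)" using ordge_mult_right[OF ordge_mult_left[OF o3]] .
  then have o4: "ordge (N + N) (C*V*V*W)" by (simp add: mult.assoc)
  have o5: "ordge (N + N) (V*(C*V))" using ordge_mult[OF assms(1) ordge_mult_left[OF assms(1)]] .
  have "ordge (N + N) (V*(C*V)*W)" using ordge_mult_right[OF o5] .
  then have o5': "ordge (N + N) (V*C*V*W)" by (simp add: mult.assoc)
  show ?thesis unfolding e assms(3)
    using o1 o2 o4 o5' assms(2)
    by (auto intro!: ordge_add ordge_diff intro: ordge_mono simp: ordge_zero)
qed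

lemma CJ_cauchy: assumes "admissible U" shows "n \<le> m \<Longrightarrow> ordge (Suc n) (CJ U m x - CJ U n x)"
proof (induction m)
  case 0 then show ?case by (simp add: ordge_zero)
next
  case (Suc m)
  show ?case
  proof (cases "n = Suc m")
    case True then show ?thesis by (simp add: ordge_zero)
  next
    case False
    then have nm: "n \<le> m" using Suc by simp
    let ?V = "sc (U (Suc m))"
    have "ordge (Suc m) ?V" using assms by (intro ordge_sc) (simp add: admissible_def)
    then have "ordge (Suc n) ?V" using nm ordge_mono[of "Suc m" ?V "Suc n"] by simp
    then have "ordge (Suc n) ((1 + ?V) * CJ U m x * ainv (1 + ?V) - CJ U m x)"
      using ainv(1)[OF adm_unitlike[OF assms, of m]] by (rule step1)
    then show ?thesis using Suc.IH[OF nm] CJ_Suc[OF assms] by (metis ordge_trans)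
  qed
qed

lemma CJ_0: "CJ U 0 x = x"
  using ainv_eq[of "1::alg" 1] by (simp add: CJ_def PP_0)

lemma CJ_hg: assumes "admissible U" "hg a x" shows "hg a (CJ U n x)"
proof -
  have u: "unitlike (PP U n)" "unitlike (ainv (PP U n))" using PP_PI[OF assms(1)] ainv by auto
  then have "hg (gx (gx (False,False) a) (False,False)) (CJ U n x)"
    unfolding CJ_def by (intro hg_mult assms(2)) (auto simp: unitlike_def)
  then show ?thesis by simp
qed



declare split_paired_All[simp del] split_paired_Ex[simp del]

lemma e1_cases: "e1 w = 1 \<or> e1 w = -1" unfolding e1_def by (cases "even (cnt1 w)") auto
lemma e2_cases: "e2 w = 1 \<or> e2 w = -1" unfolding e2_def by (cases "even (cnt2 w)") auto

lemma ordgeD: "ordge n x \<Longrightarrow> length u < n \<Longrightarrow> rep x u p = 0" by (simp add: ordge_def)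
lemma hgD: "hg a x \<Longrightarrow> p \<noteq> a \<Longrightarrow> rep x u p = 0" by (simp add: hg_def)

definition mkV :: "nat \<Rightarrow> alg \<Rightarrow> alg \<Rightarrow> series" where
  "mkV N D1 D2 = (\<lambda>w. if length w = N then (if e1 w = -1 then - rep D1 w (True,False) / 2
      else if e2 w = -1 then - rep D2 w (False,True) / 2 else 0) else 0)"

lemma homog_mkV: "homogeneous N (mkV N D1 D2)" by (simp add: homogeneous_def mkV_def)

lemma comm1_coef: "hg (False,False) V \<Longrightarrow> rep (V*Q1a - Q1a*V) u p = (if p = (True,False) then (e1 u - 1) * rep V u (False,False) else 0)"
  apply (simp add: rep_minus rep_Q1_left rep_Q1_right)
  apply (cases p)
  apply (auto simp: gx_def kap_def qpar_def hg_def algebra_simps)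
  done

lemma comm2_coef: "hg (False,False) V \<Longrightarrow> rep (V*Q2a - Q2a*V) u p = (if p = (False,True) then (e2 u - 1) * rep V u (False,False) else 0)"
  apply (simp add: rep_minus rep_Q2_left rep_Q2_right)
  apply (cases p)
  apply (auto simp: gx_def kap_def qpar_def hg_def algebra_simps)
  done

lemma rel1_coef: "hg (True,False) D \<Longrightarrow> rep (Q1a*D + D*Q1a) u (False,False) = - (1 + e1 u) * rep D u (True,False)"
  by (simp add: rep_add rep_Q1_left rep_Q1_right gx_def kap_def qpar_def algebra_simps)
lemma rel2_coef: "hg (False,True) D \<Longrightarrow> rep (Q2a*D + D*Q2a) u (False,False) = - (1 + e2 u) * rep D u (False,True)"
  by (simp add: rep_add rep_Q2_left rep_Q2_right gx_def kap_def qpar_def algebra_simps)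
lemma rel12_coef: "rep (Q1a*D2 + D2*Q1a + D1*Q2a + Q2a*D1) u (True,True) =
   (1 - e1 u) * rep D2 u (False,True) + (e2 u - 1) * rep D1 u (True,False)"
  by (simp add: rep_add rep_Q1_left rep_Q1_right rep_Q2_left rep_Q2_right gx_def kap_def qpar_def algebra_simps)

lemma LA: assumes N: "ordge N D1" "ordge N D2" and h: "hg (True,False) D1" "hg (False,True) D2"
  and r1: "ordge (Suc N) (Q1a*D1 + D1*Q1a)" and r2: "ordge (Suc N) (Q2a*D2 + D2*Q2a)"
  and r12: "ordge (Suc N) (Q1a*D2 + D2*Q1a + D1*Q2a + Q2a*D1)"
  shows "ordge (Suc N) (D1 - (sc (mkV N D1 D2) * Q1a - Q1a * sc (mkV N D1 D2)))"
    "ordge (Suc N) (D2 - (sc (mkV N D1 D2) * Q2a - Q2a * sc (mkV N D1 D2)))"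
proof -
  let ?V = "sc (mkV N D1 D2)"
  have hV: "hg (False,False) ?V" by (rule hg_sc)
  {
    fix u :: word assume u: "length u = N"
    have a1: "rep D1 u (True,False) = 0 \<or> e1 u = -1"
      using ordgeD[OF r1, of u "(False,False)"] u rel1_coef[OF h(1), of u] e1_cases[of u] by (auto simp: algebra_simps)
    have a2: "rep D2 u (False,True) = 0 \<or> e2 u = -1"
      using ordgeD[OF r2, of u "(False,False)"] u rel2_coef[OF h(2), of u] e2_cases[of u] by (auto simp: algebra_simps)
    have a12: "(1 - e1 u) * rep D2 u (False,True) + (e2 u - 1) * rep D1 u (True,False) = 0"
      using ordgeD[OF r12, of u "(True,True)"] u rel12_coef[of D2 D1 u] by simp
    note a1 a2 a12
  } note A = this
  show "ordge (Suc N) (D1 - (?V * Q1a - Q1a * ?V))"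
    unfolding ordge_def
  proof (intro allI impI)
    fix u :: word and p assume u: "length u < Suc N"
    show "rep (D1 - (?V * Q1a - Q1a * ?V)) u p = 0"
    proof (cases "length u = N")
      case False
      then have "length u < N" using u by simp
      then show ?thesis using ordgeD[OF N(1)] unfolding rep_minus[of D1] comm1_coef[OF hV] by (simp add: rep_sc mkV_def)
    next
      case True
      note A' = A[OF True]
      show ?thesis
      proof (cases "p = (True,False)")
        case False
        then show ?thesis using hgD[OF h(1) False] unfolding rep_minus[of D1] comm1_coef[OF hV] by simp
      next
        case pT: True
        show ?thesis using e1_cases[of u] e2_cases[of u] A' True pT
          unfolding rep_minus[of D1] comm1_coef[OF hV] by (auto simp: rep_sc mkV_def)
      qed
    qed
  qed
  show "ordge (Suc N) (D2 - (?V * Q2a - Q2a * ?V))"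
    unfolding ordge_def
  proof (intro allI impI)
    fix u :: word and p assume u: "length u < Suc N"
    show "rep (D2 - (?V * Q2a - Q2a * ?V)) u p = 0"
    proof (cases "length u = N")
      case False
      then have "length u < N" using u by simp
      then show ?thesis using ordgeD[OF N(2)] unfolding rep_minus[of D2] comm2_coef[OF hV] by (simp add: rep_sc mkV_def)
    next
      case True
      note A' = A[OF True]
      show ?thesis
      proof (cases "p = (False,True)")
        case False
        then show ?thesis using hgD[OF h(2) False] unfolding rep_minus[of D2] comm2_coef[OF hV] by simp
      next
        case pT: True
        show ?thesis using e1_cases[of u] e2_cases[of u] A' True pT
          unfolding rep_minus[of D2] comm2_coef[OF hV] by (auto simp: rep_sc mkV_def)
      qed
    qed
  qed
qed

lemma LB: assumes g: "homogeneous N g" and nz: "\<And>w. e1 w = 1 \<Longrightarrow> e2 w = 1 \<Longrightarrow> g w = 0"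
  and c1: "ordge (Suc N) (sc g * Q1a - Q1a * sc g)" and c2: "ordge (Suc N) (sc g * Q2a - Q2a * sc g)"
  shows "g = (\<lambda>w. 0)"
proof
  fix w
  show "g w = 0"
  proof (cases "length w = N")
    case False then show ?thesis using g by (simp add: homogeneous_def)
  next
    case True
    have "(e1 w - 1) * g w = 0" using ordgeD[OF c1, of w "(True,False)"] True
      by (simp add: comm1_coef[OF hg_sc] rep_sc)
    moreover have "(e2 w - 1) * g w = 0" using ordgeD[OF c2, of w "(False,True)"] True
      by (simp add: comm2_coef[OF hg_sc] rep_sc)
    ultimately show ?thesis using e1_cases[of w] e2_cases[of w] nz[of w] by auto
  qed
qed

lemma el_inv_Q1: "el_inv el_Q1 = rep (- Q1a)"
  by (metis Q1a_def Q1_sq el_inv_rep minus_minus mult_minus_left mult_minus_right rep_abs)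
lemma el_inv_Q2: "el_inv el_Q2 = rep (- Q2a)"
  by (metis Q2a_def Q2_sq el_inv_rep minus_minus mult_minus_left mult_minus_right rep_abs)

lemma half0_Q1: "half0 el_Q1 (fq_scalar f) = fq_scalar (\<lambda>w. (1 + e1 w)/2 * f w)"
proof (intro ext)
  fix u :: word and p
  have e: "fq_scalar f = rep (sc f)" "el_Q1 = rep Q1a" by (simp_all add: sc_def Q1a_def)
  have "el_mult (el_mult (el_inv el_Q1) (fq_scalar f)) el_Q1 = rep ((- Q1a) * sc f * Q1a)"
    unfolding el_inv_Q1 by (simp only: e rep_mult)
  also have "(- Q1a) * sc f * Q1a = - (Q1a * (sc f * Q1a))" by (simp add: mult.assoc)
  finally have "el_mult (el_mult (el_inv el_Q1) (fq_scalar f)) el_Q1 = rep (- (Q1a * (sc f * Q1a)))" .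
  then show "half0 el_Q1 (fq_scalar f) u p = fq_scalar (\<lambda>w. (1 + e1 w)/2 * f w) u p"
    unfolding half0_def
    by (cases p) (auto simp: el_scale_def el_add_def rep_uminus rep_Q1_left rep_Q1_right rep_sc
       gx_def kap_def qpar_def fq_scalar_def algebra_simps)
qed

lemma half0_Q2: "half0 el_Q2 (fq_scalar f) = fq_scalar (\<lambda>w. (1 + e2 w)/2 * f w)"
proof (intro ext)
  fix u :: word and p
  have e: "fq_scalar f = rep (sc f)" "el_Q2 = rep Q2a" by (simp_all add: sc_def Q2a_def)
  have "el_mult (el_mult (el_inv el_Q2) (fq_scalar f)) el_Q2 = rep ((- Q2a) * sc f * Q2a)"
    unfolding el_inv_Q2 by (simp only: e rep_mult)
  also have "(- Q2a) * sc f * Q2a = - (Q2a * (sc f * Q2a))" by (simp add: mult.assoc)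
  finally have "el_mult (el_mult (el_inv el_Q2) (fq_scalar f)) el_Q2 = rep (- (Q2a * (sc f * Q2a)))" .
  then show "half0 el_Q2 (fq_scalar f) u p = fq_scalar (\<lambda>w. (1 + e2 w)/2 * f w) u p"
    unfolding half0_def
    by (cases p) (auto simp: el_scale_def el_add_def rep_uminus rep_Q2_left rep_Q2_right rep_sc
       gx_def kap_def qpar_def fq_scalar_def algebra_simps)
qed

lemma norm_iff: "half0 el_Q2 (half0 el_Q1 (fq_scalar f)) = el_zero \<longleftrightarrow> (\<forall>w. e1 w = 1 \<and> e2 w = 1 \<longrightarrow> f w = 0)"
proof -
  have "half0 el_Q2 (half0 el_Q1 (fq_scalar f)) = el_zero \<longleftrightarrow> (\<forall>w. (1 + e2 w)/2 * ((1 + e1 w)/2 * f w) = 0)"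
    unfolding half0_Q1 half0_Q2
    by (auto simp: fq_scalar_def el_zero_def fun_eq_iff)
  also have "\<dots> \<longleftrightarrow> (\<forall>w. e1 w = 1 \<and> e2 w = 1 \<longrightarrow> f w = 0)"
  proof -
    have "\<And>w. (1 + e2 w)/2 * ((1 + e1 w)/2 * f w) = 0 \<longleftrightarrow> (e1 w = 1 \<and> e2 w = 1 \<longrightarrow> f w = 0)"
      subgoal for w using e1_cases[of w] e2_cases[of w] by auto
      done
    then show ?thesis by simp
  qed
  finally show ?thesis .
qed



declare split_paired_All[simp del] split_paired_Ex[simp del]

lemma Psi1_rep: "Psi1 f = rep (sc f * Q1a)" by (simp add: Psi1_def rep_mult sc_def Q1a_def)
lemma Psi2_rep: "Psi2 f = rep (sc f * Q2a)" by (simp add: Psi2_def rep_mult sc_def Q2a_def)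
lemma Q1a_abs: "abs el_Q1 = Q1a" by (simp add: Q1a_def)
lemma Q2a_abs: "abs el_Q2 = Q2a" by (simp add: Q2a_def)

lemma formal_limitD2: assumes "formal_limit (\<lambda>m. rep (S m)) (rep L)" "\<And>m. m \<ge> n \<Longrightarrow> ordge k (S m - S n)"
  shows "ordge k (L - S n)"
  unfolding ordge_def
proof (intro allI impI)
  fix u :: word and p assume u: "length u < k"
  from assms(1) have "eventually (\<lambda>m. rep (S m) u p = rep L u p) sequentially"
    by (simp add: formal_limit_def)
  then obtain N where N: "\<And>m. m \<ge> N \<Longrightarrow> rep (S m) u p = rep L u p"
    by (auto simp: eventually_sequentially)
  define m where "m = max N n"
  have "ordge k (S m - S n)" using assms(2) by (simp add: m_def)
  then have "rep (S m) u p = rep (S n) u p" using u by (simp add: ordge_def rep_minus)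
  moreover have "rep (S m) u p = rep L u p" using N by (simp add: m_def)
  ultimately show "rep (L - S n) u p = 0" by (simp add: rep_minus)
qed

lemma CJ_mult: assumes "admissible U" shows "CJ U n x * CJ U n y = CJ U n (x*y)"
proof -
  have "ainv (PP U n) * PP U n = 1" using PP_PI[OF assms] ainv by blast
  then show ?thesis unfolding CJ_def by (metis mult.assoc mult_1_left)
qed
lemma CJ_add: "CJ U n (x + y) = CJ U n x + CJ U n y" by (simp add: CJ_def algebra_simps)
lemma CJ_uminus: "CJ U n (- x) = - CJ U n x" by (simp add: CJ_def)
lemma CJ_one: assumes "admissible U" shows "CJ U n 1 = 1"
  using PP_PI[OF assms] ainv by (simp add: CJ_def)
lemma CJ_zero: "CJ U n 0 = 0" by (simp add: CJ_def)

lemma CJ_ord1: assumes "admissible U" shows "ordge 1 (CJ U n x - x)"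
  using CJ_cauchy[OF assms, of 0 n x] by (simp add: CJ_0)

lemma CJ_approx: assumes "admissible U" shows "ordge n (alim (\<lambda>m. CJ U m x) - CJ U n x)"
proof -
  have "cauchy (\<lambda>m. CJ U m x)" unfolding cauchy_def
  proof (intro allI impI)
    fix n m :: nat assume "n \<le> m"
    show "ordge n (CJ U m x - CJ U n x)" using ordge_mono[OF CJ_cauchy[OF assms \<open>n \<le> m\<close>]] by simp
  qed
  then show ?thesis by (rule alim_approx)
qed

lemma Psi1_of: assumes "hg (True,False) L" shows "Psi1 (\<lambda>w. e1 w * rep L w (True,False)) = rep L"
proof (intro ext)
  fix u :: word and p
  show "Psi1 (\<lambda>w. e1 w * rep L w (True,False)) u p = rep L u p"
  proof (cases "p = (True,False)")
    case True
    then show ?thesis unfolding Psi1_rep rep_Q1_right by (simp add: rep_sc gx_def kap_def qpar_def mult.assoc[symmetric])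
  next
    case False
    then have "gx (True,False) p \<noteq> (False,False)" by (auto simp: gx_def prod_eq_iff)
    then show ?thesis unfolding Psi1_rep rep_Q1_right using hgD[OF assms False] by (simp add: rep_sc)
  qed
qed
lemma Psi2_of: assumes "hg (False,True) L" shows "Psi2 (\<lambda>w. e2 w * rep L w (False,True)) = rep L"
proof (intro ext)
  fix u :: word and p
  show "Psi2 (\<lambda>w. e2 w * rep L w (False,True)) u p = rep L u p"
  proof (cases "p = (False,True)")
    case True
    then show ?thesis unfolding Psi2_rep rep_Q2_right by (simp add: rep_sc gx_def kap_def qpar_def mult.assoc[symmetric])
  next
    case False
    then have "gx (False,True) p \<noteq> (False,False)" by (auto simp: gx_def prod_eq_iff)
    then show ?thesis unfolding Psi2_rep rep_Q2_right using hgD[OF assms False] by (simp add: rep_sc)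
  qed
qed

lemma limit_prod: assumes "\<And>n. ordge n (L - S n)" "\<And>n. ordge n (M - T n)"
  shows "ordge n (L*M - S n * T n)"
  using ordge_prod_cong[OF assms(1) assms(2)] .



declare split_paired_All[simp del] split_paired_Ex[simp del]

lemma converse: assumes "admissible U"
  shows "\<exists>f1 f2. clifford_conservative f1 f2 \<and> clifford_productive f1 f2 \<and> represents U f1 f2"
proof -
  define L1 where "L1 = alim (\<lambda>m. CJ U m Q1a)"
  define L2 where "L2 = alim (\<lambda>m. CJ U m Q2a)"
  have a1: "\<And>n. ordge n (L1 - CJ U n Q1a)" unfolding L1_def by (rule CJ_approx[OF assms])
  have a2: "\<And>n. ordge n (L2 - CJ U n Q2a)" unfolding L2_def by (rule CJ_approx[OF assms])
  have h1: "hg (True,False) L1" unfolding L1_def by (rule alim_hg, rule CJ_hg[OF assms hg_Q1])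
  have h2: "hg (False,True) L2" unfolding L2_def by (rule alim_hg, rule CJ_hg[OF assms hg_Q2])
  define f1 where "f1 = (\<lambda>w. e1 w * rep L1 w (True,False))"
  define f2 where "f2 = (\<lambda>w. e2 w * rep L2 w (False,True))"
  have P1: "Psi1 f1 = rep L1" unfolding f1_def by (rule Psi1_of[OF h1])
  have P2: "Psi2 f2 = rep L2" unfolding f2_def by (rule Psi2_of[OF h2])
  have "ordge 1 (L1 - Q1a)" using ordge_add[OF a1[of 1] CJ_ord1[OF assms, of 1 Q1a]] by simp
  then have "rep (L1 - CJ U 0 Q1a) [] (True,False) = 0" using ordgeD by (simp add: CJ_0)
  then have c1: "f1 [] = 1" by (simp add: f1_def rep_minus CJ_0 rep_Q1)
  have "ordge 1 (L2 - Q2a)" using ordge_add[OF a2[of 1] CJ_ord1[OF assms, of 1 Q2a]] by simp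
  then have "rep (L2 - CJ U 0 Q2a) [] (False,True) = 0" using ordgeD by (simp add: CJ_0)
  then have c2: "f2 [] = 1" by (simp add: f2_def rep_minus CJ_0 rep_Q2)
  have m11: "L1*L1 = -1"
  proof -
    have H: "\<And>n. ordge n (L1*L1 - (-1))"
      using limit_prod[OF a1 a1] by (simp add: CJ_mult[OF assms] Q1_sq CJ_uminus CJ_one[OF assms])
    have "L1*L1 - (-1) = 0" by (rule ordge_all_zero[OF H])
    then show ?thesis by (simp add: eq_neg_iff_add_eq_0)
  qed
  have m22: "L2*L2 = -1"
  proof -
    have H: "\<And>n. ordge n (L2*L2 - (-1))"
      using limit_prod[OF a2 a2] by (simp add: CJ_mult[OF assms] Q2_sq CJ_uminus CJ_one[OF assms])
    have "L2*L2 - (-1) = 0" by (rule ordge_all_zero[OF H])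
    then show ?thesis by (simp add: eq_neg_iff_add_eq_0)
  qed
  have m12: "L1*L2 + L2*L1 = 0"
  proof -
    have H: "\<And>n. ordge n (L1*L2 + L2*L1 - 0)"
    proof -
      fix n
      have "CJ U n Q1a * CJ U n Q2a + CJ U n Q2a * CJ U n Q1a = 0"
      proof -
        have "CJ U n Q1a * CJ U n Q2a + CJ U n Q2a * CJ U n Q1a = CJ U n (Q1a*Q2a + Q2a*Q1a)"
          by (simp only: CJ_mult[OF assms] CJ_add)
        also have "Q1a*Q2a + Q2a*Q1a = 0" by (simp add: Q12_anti)
        finally show ?thesis by (simp add: CJ_zero)
      qed
      moreover have "ordge n ((L1*L2 - CJ U n Q1a * CJ U n Q2a) + (L2*L1 - CJ U n Q2a * CJ U n Q1a))"
        using ordge_add[OF limit_prod[OF a1 a2, of n] limit_prod[OF a2 a1, of n]] .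
      ultimately show "ordge n (L1*L2 + L2*L1 - 0)"
        by (metis (no_types, lifting) add_diff_add diff_zero)
    qed
    have "L1*L2 + L2*L1 - 0 = 0" by (rule ordge_all_zero[OF H])
    then show ?thesis by simp
  qed
  have prod: "clifford_productive f1 f2"
  proof -
    have "el_mult (rep L1) (rep L1) = el_scale (-1) el_one" "el_mult (rep L2) (rep L2) = el_scale (-1) el_one"
      using m11 m22 by (metis one_alg.rep_eq rep_mult uminus_alg.rep_eq)+
    moreover have "el_add (el_mult (rep L1) (rep L2)) (el_mult (rep L2) (rep L1)) = el_zero"
      using m12 by (metis plus_alg.rep_eq rep_mult zero_alg.rep_eq)
    ultimately show ?thesis unfolding clifford_productive_def P1 P2 by simp
  qed
  have rep1: "represents U f1 f2"
    unfolding represents_def P1 P2 conj_rep[OF assms] Q1a_abs Q2a_abs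
  proof
    show "formal_limit (\<lambda>n. rep (CJ U n Q1a)) (rep L1)"
    proof (rule formal_limitI)
      fix n
      show "eventually (\<lambda>m. ordge n (L1 - CJ U m Q1a)) sequentially"
        unfolding eventually_sequentially using ordge_mono[OF a1] by blast
    qed
    show "formal_limit (\<lambda>n. rep (CJ U n Q2a)) (rep L2)"
    proof (rule formal_limitI)
      fix n
      show "eventually (\<lambda>m. ordge n (L2 - CJ U m Q2a)) sequentially"
        unfolding eventually_sequentially using ordge_mono[OF a2] by blast
    qed
  qed
  show ?thesis using c1 c2 prod rep1 by (auto simp: clifford_conservative_def)
qed



declare split_paired_All[simp del] split_paired_Ex[simp del]

primrec PS :: "alg \<Rightarrow> alg \<Rightarrow> nat \<Rightarrow> alg" where
  "PS A B 0 = 1"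
| "PS A B (Suc n) = (1 + sc (mkV (Suc n) (A - PS A B n * Q1a * ainv (PS A B n)) (B - PS A B n * Q2a * ainv (PS A B n)))) * PS A B n"

definition UU :: "alg \<Rightarrow> alg \<Rightarrow> nat \<Rightarrow> series" where
  "UU A B k = (if k = 0 then (\<lambda>w. 0) else mkV k (A - PS A B (k-1) * Q1a * ainv (PS A B (k-1))) (B - PS A B (k-1) * Q2a * ainv (PS A B (k-1))))"

lemma UU_adm: "admissible (UU A B)"
  by (auto simp: admissible_def UU_def homog_mkV)

lemma PP_UU: "PP (UU A B) n = PS A B n"
  by (induction n) (simp_all add: PP_0 PP_Suc UU_def)

lemma UU_Suc: "UU A B (Suc n) = mkV (Suc n) (A - CJ (UU A B) n Q1a) (B - CJ (UU A B) n Q2a)"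
  by (simp add: UU_def CJ_def PP_UU)

lemma id1: "Q*D + D*Q = ((C+D)*(C+D) - C*C) - (C-Q)*D - D*(C-Q) - D*(D::alg)"
  by (simp add: algebra_simps)
lemma id12: "Q1*D2 + D2*Q1 + D1*Q2 + Q2*D1 = ((C1+D1)*(C2+D2) + (C2+D2)*(C1+D1) - (C1*C2 + C2*C1))
   - (C1-Q1)*D2 - D2*(C1-Q1) - D1*(C2-Q2) - (C2-Q2)*D1 - D1*D2 - D2*(D1::alg)"
  by (simp add: algebra_simps)

lemma ord_sq: assumes "ordge N D" "N \<ge> 1" shows "ordge (Suc N) (D*D)"
  using ordge_mono[OF ordge_mult[OF assms(1) assms(1)]] assms(2) by simp

lemma existence:
  assumes cons: "clifford_conservative f1 f2" and prod: "clifford_productive f1 f2"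
  shows "\<exists>U. admissible U \<and> normalized U \<and> represents U f1 f2"
proof -
  define A where "A = sc f1 * Q1a"
  define B where "B = sc f2 * Q2a"
  have AA: "A*A = -1" using prod unfolding clifford_productive_def Psi1_rep A_def
    by (metis one_alg.rep_eq rep_inject rep_mult uminus_alg.rep_eq)
  have BB: "B*B = -1" using prod unfolding clifford_productive_def Psi2_rep B_def
    by (metis one_alg.rep_eq rep_inject rep_mult uminus_alg.rep_eq)
  have AB: "A*B + B*A = 0" using prod unfolding clifford_productive_def Psi1_rep Psi2_rep A_def B_def
    by (metis plus_alg.rep_eq rep_inject rep_mult zero_alg.rep_eq)
  have hA: "hg (True,False) A" unfolding A_def using hg_mult[OF hg_sc hg_Q1] by simp
  have hB: "hg (False,True) B" unfolding B_def using hg_mult[OF hg_sc hg_Q2] by simp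
  have oA: "ordge 1 (A - Q1a)" unfolding ordge_def
  proof (intro allI impI)
    fix u :: word and p assume "length u < 1"
    then have u: "u = []" by simp
    show "rep (A - Q1a) u p = 0"
      using cons u by (cases "p = (True,False)")
        (auto simp: A_def rep_minus rep_Q1_right rep_Q1 rep_sc gx_def prod_eq_iff clifford_conservative_def)
  qed
  have oB: "ordge 1 (B - Q2a)" unfolding ordge_def
  proof (intro allI impI)
    fix u :: word and p assume "length u < 1"
    then have u: "u = []" by simp
    show "rep (B - Q2a) u p = 0"
      using cons u by (cases "p = (False,True)")
        (auto simp: B_def rep_minus rep_Q2_right rep_Q2 rep_sc gx_def prod_eq_iff clifford_conservative_def)
  qed
  define U where "U = UU A B"
  have adm: "admissible U" unfolding U_def by (rule UU_adm)
  have main: "ordge (Suc n) (A - CJ U n Q1a) \<and> ordge (Suc n) (B - CJ U n Q2a)" for n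
  proof (induction n)
    case 0 then show ?case using oA oB by (simp add: CJ_0)
  next
    case (Suc n)
    define N where "N = Suc n"
    have N1: "N \<ge> 1" by (simp add: N_def)
    define C1 where "C1 = CJ U n Q1a"
    define C2 where "C2 = CJ U n Q2a"
    define D1 where "D1 = A - C1"
    define D2 where "D2 = B - C2"
    define V where "V = sc (U N)"
    have VD: "V = sc (mkV N D1 D2)" by (simp add: V_def U_def N_def UU_Suc D1_def D2_def C1_def C2_def)
    have oD1: "ordge N D1" and oD2: "ordge N D2" using Suc by (simp_all add: N_def D1_def D2_def C1_def C2_def)
    have hD1: "hg (True,False) D1" unfolding D1_def C1_def by (rule hg_diff[OF hA CJ_hg[OF adm hg_Q1]])
    have hD2: "hg (False,True) D2" unfolding D2_def C2_def by (rule hg_diff[OF hB CJ_hg[OF adm hg_Q2]])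
    have CC1: "C1*C1 = -1" by (simp add: C1_def CJ_mult[OF adm] Q1_sq CJ_uminus CJ_one[OF adm])
    have CC2: "C2*C2 = -1" by (simp add: C2_def CJ_mult[OF adm] Q2_sq CJ_uminus CJ_one[OF adm])
    have CC12: "C1*C2 + C2*C1 = 0"
    proof -
      have "C1*C2 + C2*C1 = CJ U n (Q1a*Q2a + Q2a*Q1a)"
        by (simp only: C1_def C2_def CJ_mult[OF adm] CJ_add)
      also have "Q1a*Q2a + Q2a*Q1a = 0" by (simp add: Q12_anti)
      finally show ?thesis by (simp add: CJ_zero)
    qed
    have o1: "ordge 1 (C1 - Q1a)" "ordge 1 (C2 - Q2a)" unfolding C1_def C2_def by (rule CJ_ord1[OF adm])+
    have eA: "C1 + D1 = A" "C2 + D2 = B" by (simp_all add: D1_def D2_def)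
    have r1: "ordge (Suc N) (Q1a*D1 + D1*Q1a)"
      unfolding id1[of Q1a D1 C1] eA AA CC1
      using ordge_mult[OF o1(1) oD1] ordge_mult[OF oD1 o1(1)] ord_sq[OF oD1 N1]
      by (auto intro!: ordge_diff ordge_uminus simp: ordge_zero)
    have r2: "ordge (Suc N) (Q2a*D2 + D2*Q2a)"
      unfolding id1[of Q2a D2 C2] eA BB CC2
      using ordge_mult[OF o1(2) oD2] ordge_mult[OF oD2 o1(2)] ord_sq[OF oD2 N1]
      by (auto intro!: ordge_diff ordge_uminus simp: ordge_zero)
    have r12: "ordge (Suc N) (Q1a*D2 + D2*Q1a + D1*Q2a + Q2a*D1)"
      unfolding id12[of Q1a D2 D1 Q2a C1 C2] eA AB CC12
      using ordge_mult[OF o1(1) oD2] ordge_mult[OF oD2 o1(1)] ordge_mult[OF oD1 o1(2)] ordge_mult[OF o1(2) oD1]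
        ordge_mono[OF ordge_mult[OF oD1 oD2], of "Suc N"] ordge_mono[OF ordge_mult[OF oD2 oD1], of "Suc N"] N1
      by (auto intro!: ordge_diff ordge_uminus simp: ordge_zero)
    have la: "ordge (Suc N) (D1 - (V*Q1a - Q1a*V))" "ordge (Suc N) (D2 - (V*Q2a - Q2a*V))"
      unfolding VD using LA[OF oD1 oD2 hD1 hD2 r1 r2 r12] by auto
    have oV: "ordge N V" unfolding V_def using adm N1 by (intro ordge_sc) (simp add: admissible_def)
    have inv: "(1 + V) * ainv (1 + V) = 1" unfolding V_def N_def using ainv(1)[OF adm_unitlike[OF adm, of n]] .
    have cj: "CJ U N x = (1 + V) * CJ U n x * ainv (1 + V)" for x unfolding N_def V_def by (rule CJ_Suc[OF adm])
    have s1: "ordge (Suc N) (CJ U N Q1a - (C1 + V*Q1a - Q1a*V))"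
      unfolding cj C1_def by (rule step2[OF oV N1 inv o1(1)[unfolded C1_def]])
    have s2: "ordge (Suc N) (CJ U N Q2a - (C2 + V*Q2a - Q2a*V))"
      unfolding cj C2_def by (rule step2[OF oV N1 inv o1(2)[unfolded C2_def]])
    have e1: "A - CJ U N Q1a = (D1 - (V*Q1a - Q1a*V)) - (CJ U N Q1a - (C1 + V*Q1a - Q1a*V))"
      by (simp add: D1_def algebra_simps)
    have g1: "ordge (Suc N) (A - CJ U N Q1a)" unfolding e1 by (rule ordge_diff[OF la(1) s1])
    have e2: "B - CJ U N Q2a = (D2 - (V*Q2a - Q2a*V)) - (CJ U N Q2a - (C2 + V*Q2a - Q2a*V))"
      by (simp add: D2_def algebra_simps)
    have g2: "ordge (Suc N) (B - CJ U N Q2a)" unfolding e2 by (rule ordge_diff[OF la(2) s2])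
    show ?case using g1 g2 by (simp add: N_def)
  qed
  have repr: "represents U f1 f2"
    unfolding represents_def Psi1_rep Psi2_rep conj_rep[OF adm] Q1a_abs Q2a_abs A_def[symmetric] B_def[symmetric]
  proof
    show "formal_limit (\<lambda>n. rep (CJ U n Q1a)) (rep A)"
    proof (rule formal_limitI)
      fix n
      show "eventually (\<lambda>m. ordge n (A - CJ U m Q1a)) sequentially"
        unfolding eventually_sequentially using main ordge_mono by (metis le_SucI)
    qed
    show "formal_limit (\<lambda>n. rep (CJ U n Q2a)) (rep B)"
    proof (rule formal_limitI)
      fix n
      show "eventually (\<lambda>m. ordge n (B - CJ U m Q2a)) sequentially"
        unfolding eventually_sequentially using main ordge_mono by (metis le_SucI)
    qed
  qed
  have norm: "normalized U"
    unfolding normalized_def norm_iff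
  proof (intro allI impI)
    fix i :: nat and w :: word assume i: "i \<ge> 1" and e: "e1 w = 1 \<and> e2 w = 1"
    then show "U i w = 0" unfolding U_def UU_def using i by (simp add: mkV_def)
  qed
  show ?thesis using adm norm repr by blast
qed



declare split_paired_All[simp del] split_paired_Ex[simp del]

lemma PP_eq: "(\<And>k. 1 \<le> k \<Longrightarrow> k \<le> n \<Longrightarrow> U k = U' k) \<Longrightarrow> PP U n = PP U' n"
proof (induction n)
  case 0 then show ?case by (simp add: PP_0)
next
  case (Suc n)
  have "PP U n = PP U' n" using Suc.IH Suc.prems by simp
  moreover have "U (Suc n) = U' (Suc n)" using Suc.prems by simp
  ultimately show ?case by (simp add: PP_Suc)
qed

lemma sc_diff: "sc (\<lambda>w. f w - g w) = sc f - sc g"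
  by (rule alg_eqI) (simp add: rep_sc rep_minus)

lemma lim_approx: assumes adm: "admissible U" and fl: "formal_limit (\<lambda>m. rep (CJ U m x)) (rep L)"
  shows "ordge (Suc m) (L - CJ U m x)"
  by (rule formal_limitD2[OF fl]) (rule CJ_cauchy[OF adm])

lemma uniqueness:
  assumes a: "admissible U" "normalized U" "represents U f1 f2"
    and a': "admissible U'" "normalized U'" "represents U' f1 f2"
  shows "\<forall>i\<ge>1. U i = U' i"
proof -
  define L1 where "L1 = abs (Psi1 f1)"
  define L2 where "L2 = abs (Psi2 f2)"
  have fl: "formal_limit (\<lambda>m. rep (CJ U m Q1a)) (rep L1)" "formal_limit (\<lambda>m. rep (CJ U m Q2a)) (rep L2)"
    using a(3) unfolding represents_def conj_rep[OF a(1)] Q1a_abs Q2a_abs L1_def L2_def by simp_all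
  have fl': "formal_limit (\<lambda>m. rep (CJ U' m Q1a)) (rep L1)" "formal_limit (\<lambda>m. rep (CJ U' m Q2a)) (rep L2)"
    using a'(3) unfolding represents_def conj_rep[OF a'(1)] Q1a_abs Q2a_abs L1_def L2_def by simp_all
  have nz: "\<And>i w. i \<ge> 1 \<Longrightarrow> e1 w = 1 \<Longrightarrow> e2 w = 1 \<Longrightarrow> U i w = 0 \<and> U' i w = 0"
    using a(2) a'(2) unfolding normalized_def norm_iff by blast
  have "\<forall>k. 1 \<le> k \<longrightarrow> k \<le> n \<longrightarrow> U k = U' k" for n
  proof (induction n)
    case 0 then show ?case by simp
  next
    case (Suc n)
    define N where "N = Suc n"
    have N1: "N \<ge> 1" by (simp add: N_def)
    have PPe: "PP U n = PP U' n" using Suc.IH by (intro PP_eq) auto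
    have CJe: "CJ U n x = CJ U' n x" for x by (simp add: CJ_def PPe)
    define V where "V = sc (U N)"
    define V' where "V' = sc (U' N)"
    have oV: "ordge N V" unfolding V_def using a(1) N1 by (intro ordge_sc) (simp add: admissible_def)
    have oV': "ordge N V'" unfolding V'_def using a'(1) N1 by (intro ordge_sc) (simp add: admissible_def)
    have inv: "(1 + V) * ainv (1 + V) = 1" unfolding V_def N_def using ainv(1)[OF adm_unitlike[OF a(1), of n]] .
    have inv': "(1 + V') * ainv (1 + V') = 1" unfolding V'_def N_def using ainv(1)[OF adm_unitlike[OF a'(1), of n]] .
    have cj: "CJ U N x = (1 + V) * CJ U n x * ainv (1 + V)" for x unfolding N_def V_def by (rule CJ_Suc[OF a(1)])
    have cj': "CJ U' N x = (1 + V') * CJ U n x * ainv (1 + V')" for x unfolding N_def V'_def CJe by (rule CJ_Suc[OF a'(1)])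
    have key: "ordge (Suc N) ((V - V')*Q - Q*(V - V'))"
      if Qs: "Q = Q1a \<and> L = L1 \<or> Q = Q2a \<and> L = L2" for Q L
    proof -
      have fQ: "formal_limit (\<lambda>m. rep (CJ U m Q)) (rep L)" "formal_limit (\<lambda>m. rep (CJ U' m Q)) (rep L)"
        using Qs fl fl' by auto
      have o1: "ordge 1 (CJ U n Q - Q)" by (rule CJ_ord1[OF a(1)])
      have s: "ordge (Suc N) (CJ U N Q - (CJ U n Q + V*Q - Q*V))"
        unfolding cj by (rule step2[OF oV N1 inv o1])
      have s': "ordge (Suc N) (CJ U' N Q - (CJ U n Q + V'*Q - Q*V'))"
        unfolding cj' by (rule step2[OF oV' N1 inv' o1])
      have l: "ordge (Suc N) (L - CJ U N Q)" by (rule lim_approx[OF a(1) fQ(1)])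
      have l': "ordge (Suc N) (L - CJ U' N Q)" by (rule lim_approx[OF a'(1) fQ(2)])
      have e: "(V - V')*Q - Q*(V - V') = ((L - CJ U' N Q) - (L - CJ U N Q)) - (CJ U N Q - (CJ U n Q + V*Q - Q*V))
          + (CJ U' N Q - (CJ U n Q + V'*Q - Q*V'))"
        by (simp add: algebra_simps)
      show ?thesis unfolding e by (intro ordge_add ordge_diff l l' s s')
    qed
    define g where "g = (\<lambda>w. U N w - U' N w)"
    have sg: "sc g = V - V'" unfolding g_def V_def V'_def by (rule sc_diff)
    have hg: "homogeneous N g" using a(1) a'(1) N1 by (auto simp: admissible_def homogeneous_def g_def)
    have "g = (\<lambda>w. 0)"
      by (rule LB[OF hg]) (use nz N1 key[of Q1a L1] key[of Q2a L2] sg in \<open>auto simp: g_def\<close>)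
    then have "U N = U' N" by (auto simp: g_def fun_eq_iff)
    then show ?case using Suc.IH by (auto simp: N_def le_Suc_eq)
  qed
  then show ?thesis by blast
qed

theorem mainTheorem12:
  shows "(\<forall>f1 f2. clifford_conservative f1 f2 \<and> clifford_productive f1 f2 \<longrightarrow>
            (\<exists>U. admissible U \<and> normalized U \<and> represents U f1 f2) \<and>
            (\<forall>U U'. admissible U \<and> normalized U \<and> represents U f1 f2 \<and>
                    admissible U' \<and> normalized U' \<and> represents U' f1 f2 \<longrightarrow>
                    (\<forall>i\<ge>1. U i = U' i))) \<and>
         (\<forall>U. admissible U \<longrightarrow>
            (\<exists>f1 f2. clifford_conservative f1 f2 \<and> clifford_productive f1 f2 \<and>
                     represents U f1 f2))"
  using existence uniqueness converse by blast


end
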